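(* Let $F$ be a field of characteristic zero, $G$ a group, $H$ an abelian group, $\beta$ a skew-symmetric bicharacter on $H$, $C$ an $H$-graded $\beta$-commutative algebra generating the variety of all $H$-graded $\beta$-commutative algebras, and $R$ any $G$-graded algebra. Let $\mathbf g=(g_1,\dots,g_n)\in G^n$, $\mathbf h=(h_1,\dots,h_n)\in H^n$ and let $f\in T_{G\times H}(R\otimes C)\cap P_{\mathbf g\times\mathbf h}$. Then there exists $f_0\in P_{\mathbf g}\cap T_G(R)$ such that $f=\phi_{\mathbf h}(f_0)$.
   Context: $H$ is written additively; $\beta:H\times H\to F^*$ satisfies $\beta(g+h,k)=\beta(g,k)\beta(h,k)$, $\beta(g,h+k)=\beta(g,h)\beta(g,k)$, $\beta(g,h)=\beta(h,g)^{-1}$. For homogeneous $a\in C_h,b\in C_k$, $[a,b]_\beta=ab-\beta(h,k)ba$; $C$ is $\beta$-commutative if $[a,b]_\beta=0$ for all $a,b$. $C$ generates the variety of all $H$-graded $\beta$-commutative algebras if its $H$-graded identities are exactly the $T_H$-ideal generated by $[x_{h,1},x_{k,2}]_\beta$, $h,k\in H$. $R\otimes C$ is $G\times H$-graded by $(R\otimes C)_{(g,h)}=R_g\otimes C_h$. $F\langle X|K\rangle$ denotes the free algebra on variables $x_{k,i}$ of degree $k\in K$, $i\ge1$; $T_K(\cdot)$ is the ideal of $K$-graded identities. For $\mathbf g\in G^n$, $P_{\mathbf g}$ is the span of $x_{g_{\sigma(1)},\sigma(1)}\cdots x_{g_{\sigma(n)},\sigma(n)}$, $\sigma\in S_n$;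 $P_{\mathbf g\times\mathbf h}$ is defined likewise with degrees $(g_i,h_i)$. Map $\zeta$: if $m=x_{(a_{\tau(1)},b_{\tau(1)}),\tau(1)}\cdots x_{(a_{\tau(k)},b_{\tau(k)}),\tau(k)}$ is a multilinear monomial in $F\langle X|G\times H\rangle$ in variables with indices $i_1<\dots<i_k$ ($\tau$ an ordering of these indices), let $\lambda\in F^*$ be such that $x_{b_{i_1},i_1}\cdots x_{b_{i_k},i_k}=\lambda\, x_{b_{\tau(1)},\tau(1)}\cdots x_{b_{\tau(k)},\tau(k)}$ in the free $H$-graded $\beta$-commutative algebra; set $\zeta(m)=\lambda m$. The linear map $\phi_{\mathbf h}$ on multilinear polynomials in $x_{a_1,1},\dots,x_{a_n,n}$ sends a monomial $x_{a_{\sigma(1)},\sigma(1)}\cdots x_{a_{\sigma(n)},\sigma(n)}$ to $\zeta(x_{(a_{\sigma(1)},h_{\sigma(1)}),\sigma(1)}\cdots x_{(a_{\sigma(n)},h_{\sigma(n)}),\sigma(n)})$. *)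

theory Defs
  imports Main "HOL.Vector_Spaces" "HOL-Library.Function_Algebras" "HOL-Combinatorics.Permutations"
begin

definition fsupp :: "('a \<Rightarrow> 'f::zero) \<Rightarrow> 'a set" where
  "fsupp p = {x. p x \<noteq> 0}"

definition smulf :: "'f::times \<Rightarrow> ('a \<Rightarrow> 'f) \<Rightarrow> ('a \<Rightarrow> 'f)" where
  "smulf c p = (\<lambda>x. c * p x)"

text \<open>A polynomial is a finitely supported function from words to F; a word is a list of
  variables x_{k,i}, represented as pairs (k,i).\<close>

definition free_alg :: "(('k \<times> nat) list \<Rightarrow> 'f::zero) set" where
  "free_alg = {p. finite (fsupp p) \<and> p [] = 0}"

definition monw :: "'w \<Rightarrow> ('w \<Rightarrow> 'f::zero_neq_one)" where
  "monw w = (\<lambda>u. if u = w then 1 else 0)"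

definition pmul :: "(('k \<times> nat) list \<Rightarrow> 'f::comm_ring) \<Rightarrow> (('k \<times> nat) list \<Rightarrow> 'f)
    \<Rightarrow> (('k \<times> nat) list \<Rightarrow> 'f)" where
  "pmul p q = (\<lambda>w. \<Sum>i\<le>length w. p (take i w) * q (drop i w))"

fun gwprod :: "('a \<Rightarrow> 'a \<Rightarrow> 'a) \<Rightarrow> ('v \<Rightarrow> 'a) \<Rightarrow> 'v list \<Rightarrow> 'a::zero" where
  "gwprod m s [] = 0"
| "gwprod m s [x] = s x"
| "gwprod m s (x # y # xs) = m (s x) (gwprod m s (y # xs))"

definition geval :: "('a \<Rightarrow> 'a \<Rightarrow> 'a) \<Rightarrow> ('f \<Rightarrow> 'a \<Rightarrow> 'a) \<Rightarrow> ('v \<Rightarrow> 'a)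
    \<Rightarrow> ('v list \<Rightarrow> 'f::zero) \<Rightarrow> 'a::comm_monoid_add" where
  "geval m sc s p = (\<Sum>w\<in>fsupp p. sc (p w) (gwprod m s w))"

definition graded_algebra :: "('f::field \<Rightarrow> 'a::ring \<Rightarrow> 'a) \<Rightarrow> ('k::monoid_add \<Rightarrow> 'a set) \<Rightarrow> bool" where
  "graded_algebra sc A \<longleftrightarrow>
     vector_space sc
   \<and> (\<forall>c x y. sc c (x * y) = sc c x * y \<and> sc c (x * y) = x * sc c y)
   \<and> (\<forall>k. 0 \<in> A k \<and> (\<forall>x\<in>A k. \<forall>y\<in>A k. x + y \<in> A k) \<and> (\<forall>c. \<forall>x\<in>A k. sc c x \<in> A k))
   \<and> (\<forall>k l. \<forall>x\<in>A k. \<forall>y\<in>A l. x * y \<in> A (k + l))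
   \<and> (\<forall>x. \<exists>!d. finite {k. d k \<noteq> 0} \<and> (\<forall>k. d k \<in> A k) \<and> x = (\<Sum>k\<in>{k. d k \<noteq> 0}. d k))"

definition graded_subst :: "('k \<Rightarrow> 'a set) \<Rightarrow> ('k \<times> nat \<Rightarrow> 'a) \<Rightarrow> bool" where
  "graded_subst A s \<longleftrightarrow> (\<forall>k i. s (k, i) \<in> A k)"

definition TG :: "('f::field \<Rightarrow> 'a::ring \<Rightarrow> 'a) \<Rightarrow> ('k \<Rightarrow> 'a set) \<Rightarrow> (('k \<times> nat) list \<Rightarrow> 'f) set" where
  "TG sc A = {p \<in> free_alg. \<forall>s. graded_subst A s \<longrightarrow> geval (*) sc s p = 0}"

definition bicharacter :: "('h::ab_group_add \<Rightarrow> 'h \<Rightarrow> 'f::field) \<Rightarrow> bool" where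
  "bicharacter \<beta> \<longleftrightarrow> (\<forall>g h. \<beta> g h \<noteq> 0)
     \<and> (\<forall>g h k. \<beta> (g + h) k = \<beta> g k * \<beta> h k)
     \<and> (\<forall>g h k. \<beta> g (h + k) = \<beta> g h * \<beta> g k)
     \<and> (\<forall>g h. \<beta> g h = inverse (\<beta> h g))"

definition beta_commutative :: "('h \<Rightarrow> 'h \<Rightarrow> 'f::field) \<Rightarrow> ('f \<Rightarrow> 'a::ring \<Rightarrow> 'a) \<Rightarrow> ('h \<Rightarrow> 'a set) \<Rightarrow> bool" where
  "beta_commutative \<beta> sc A \<longleftrightarrow> (\<forall>h k. \<forall>a\<in>A h. \<forall>b\<in>A k. a * b - sc (\<beta> h k) (b * a) = 0)"

definition word_deg :: "('k::monoid_add \<times> nat) list \<Rightarrow> 'k" where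
  "word_deg w = sum_list (map fst w)"

definition homog :: "'k::monoid_add \<Rightarrow> (('k \<times> nat) list \<Rightarrow> 'f::zero) set" where
  "homog k = {p \<in> free_alg. \<forall>w\<in>fsupp p. word_deg w = k}"

text \<open>The T_K-ideal generated by a set S of polynomials: the least ideal of the free
  algebra containing S and stable under all graded endomorphisms.\<close>
inductive_set Tideal :: "(('k::monoid_add \<times> nat) list \<Rightarrow> 'f::field) set \<Rightarrow> (('k \<times> nat) list \<Rightarrow> 'f) set"
  for S where
  gen: "p \<in> S \<Longrightarrow> p \<in> Tideal S"
| zero: "0 \<in> Tideal S"
| add: "p \<in> Tideal S \<Longrightarrow> q \<in> Tideal S \<Longrightarrow> p + q \<in> Tideal S"
| smul: "p \<in> Tideal S \<Longrightarrow> smulf c p \<in> Tideal S"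
| mult_left: "p \<in> Tideal S \<Longrightarrow> q \<in> free_alg \<Longrightarrow> pmul q p \<in> Tideal S"
| mult_right: "p \<in> Tideal S \<Longrightarrow> q \<in> free_alg \<Longrightarrow> pmul p q \<in> Tideal S"
| endo: "p \<in> Tideal S \<Longrightarrow> (\<forall>k i. s (k, i) \<in> homog k) \<Longrightarrow> geval pmul smulf s p \<in> Tideal S"

definition beta_comm :: "('h \<Rightarrow> 'h \<Rightarrow> 'f::field) \<Rightarrow> 'h \<Rightarrow> 'h \<Rightarrow> (('h \<times> nat) list \<Rightarrow> 'f)" where
  "beta_comm \<beta> h k = monw [(h, 1), (k, 2)] - smulf (\<beta> h k) (monw [(k, 2), (h, 1)])"

definition beta_comm_Tideal :: "('h::ab_group_add \<Rightarrow> 'h \<Rightarrow> 'f::field) \<Rightarrow> (('h \<times> nat) list \<Rightarrow> 'f) set" where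
  "beta_comm_Tideal \<beta> = Tideal {beta_comm \<beta> h k | h k. True}"

definition generates_beta_variety :: "('h::ab_group_add \<Rightarrow> 'h \<Rightarrow> 'f::field) \<Rightarrow> ('f \<Rightarrow> 'c::ring \<Rightarrow> 'c)
    \<Rightarrow> ('h \<Rightarrow> 'c set) \<Rightarrow> bool" where
  "generates_beta_variety \<beta> sc C \<longleftrightarrow> TG sc C = beta_comm_Tideal \<beta>"

text \<open>R \<otimes> C is the free F-vector space on R \<times> C (finitely supported functions) modulo the
  subspace tens_rel of bilinearity relations. An element is represented by a finitely
  supported function; it is zero in R \<otimes> C iff it lies in tens_rel.\<close>

definition tpure :: "'r \<Rightarrow> 'c \<Rightarrow> ('r \<times> 'c \<Rightarrow> 'f::zero_neq_one)" where
  "tpure r c = monw (r, c)"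

inductive_set tens_rel :: "('f::field \<Rightarrow> 'r::ring \<Rightarrow> 'r) \<Rightarrow> ('f \<Rightarrow> 'c::ring \<Rightarrow> 'c) \<Rightarrow> ('r \<times> 'c \<Rightarrow> 'f) set"
  for sR sC where
  zero: "0 \<in> tens_rel sR sC"
| add: "x \<in> tens_rel sR sC \<Longrightarrow> y \<in> tens_rel sR sC \<Longrightarrow> x + y \<in> tens_rel sR sC"
| smul: "x \<in> tens_rel sR sC \<Longrightarrow> smulf a x \<in> tens_rel sR sC"
| addL: "tpure (r1 + r2) c - tpure r1 c - tpure r2 c \<in> tens_rel sR sC"
| addR: "tpure r (c1 + c2) - tpure r c1 - tpure r c2 \<in> tens_rel sR sC"
| smulL: "tpure (sR a r) c - smulf a (tpure r c) \<in> tens_rel sR sC"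
| smulR: "tpure r (sC a c) - smulf a (tpure r c) \<in> tens_rel sR sC"

definition tmul :: "('r::ring \<times> 'c::ring \<Rightarrow> 'f::field) \<Rightarrow> ('r \<times> 'c \<Rightarrow> 'f) \<Rightarrow> ('r \<times> 'c \<Rightarrow> 'f)" where
  "tmul x y = (\<Sum>p\<in>fsupp x. \<Sum>q\<in>fsupp y. smulf (x p * y q) (tpure (fst p * fst q) (snd p * snd q)))"

text \<open>Representatives of elements of (R \<otimes> C)_{(g,h)} = R_g \<otimes> C_h.\<close>
definition tens_comp :: "('g \<Rightarrow> 'r set) \<Rightarrow> ('h \<Rightarrow> 'c set) \<Rightarrow> 'g \<times> 'h \<Rightarrow> ('r \<times> 'c \<Rightarrow> 'f::zero) set" where
  "tens_comp A B gh = {x. finite (fsupp x) \<and> fsupp x \<subseteq> A (fst gh) \<times> B (snd gh)}"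

definition TG_tensor :: "('f::field \<Rightarrow> 'r::ring \<Rightarrow> 'r) \<Rightarrow> ('g \<Rightarrow> 'r set) \<Rightarrow> ('f \<Rightarrow> 'c::ring \<Rightarrow> 'c)
    \<Rightarrow> ('h \<Rightarrow> 'c set) \<Rightarrow> ((('g \<times> 'h) \<times> nat) list \<Rightarrow> 'f) set" where
  "TG_tensor sR A sC B = {p \<in> free_alg. \<forall>s. graded_subst (tens_comp A B) s \<longrightarrow>
      geval tmul smulf s p \<in> tens_rel sR sC}"

definition perm_word :: "nat \<Rightarrow> (nat \<Rightarrow> 'k) \<Rightarrow> (nat \<Rightarrow> nat) \<Rightarrow> ('k \<times> nat) list" where
  "perm_word n g \<sigma> = map (\<lambda>j. (g (\<sigma> j), \<sigma> j)) [1..<n+1]"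

definition Pml :: "nat \<Rightarrow> (nat \<Rightarrow> 'k) \<Rightarrow> (('k \<times> nat) list \<Rightarrow> 'f::zero) set" where
  "Pml n g = {p. finite (fsupp p) \<and> fsupp p \<subseteq> {perm_word n g \<sigma> | \<sigma>. \<sigma> permutes {1..n}}}"

text \<open>For a multilinear monomial w in F<X|G\<times>H>, zeta_coef w is the scalar \<lambda> with
  x_{b_{i_1},i_1} ... x_{b_{i_k},i_k} = \<lambda> x_{b_{\<tau>(1)},\<tau>(1)} ... x_{b_{\<tau>(k)},\<tau>(k)} in the free H-graded
  beta-commutative algebra F<X|H> / beta_comm_Tideal.\<close>
definition zeta_coef :: "('h::ab_group_add \<Rightarrow> 'h \<Rightarrow> 'f::field) \<Rightarrow> ((('g \<times> 'h) \<times> nat) list) \<Rightarrow> 'f" where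
  "zeta_coef \<beta> w = (THE c.
     let wH = map (\<lambda>((a, b), i). (b, i)) w
     in monw (sort_key snd wH) - smulf c (monw wH) \<in> beta_comm_Tideal \<beta>)"

definition zeta :: "('h::ab_group_add \<Rightarrow> 'h \<Rightarrow> 'f::field) \<Rightarrow> ((('g \<times> 'h) \<times> nat) list)
    \<Rightarrow> ((('g \<times> 'h) \<times> nat) list \<Rightarrow> 'f)" where
  "zeta \<beta> w = smulf (zeta_coef \<beta> w) (monw w)"

definition lift_word :: "(nat \<Rightarrow> 'h) \<Rightarrow> ('g \<times> nat) list \<Rightarrow> (('g \<times> 'h) \<times> nat) list" where
  "lift_word h w = map (\<lambda>(a, i). ((a, h i), i)) w"

definition phi :: "('h::ab_group_add \<Rightarrow> 'h \<Rightarrow> 'f::field) \<Rightarrow> (nat \<Rightarrow> 'h) \<Rightarrow> (('g \<times> nat) list \<Rightarrow> 'f)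
    \<Rightarrow> ((('g \<times> 'h) \<times> nat) list \<Rightarrow> 'f)" where
  "phi \<beta> h p = (\<Sum>w\<in>fsupp p. smulf (p w) (zeta \<beta> (lift_word h w)))"

end

theory Submission
  imports Defs
begin


locale alg =
  fixes m :: "'a::ab_group_add \<Rightarrow> 'a \<Rightarrow> 'a" and sc :: "'f::field \<Rightarrow> 'a \<Rightarrow> 'a"
  assumes assoc: "m (m x y) z = m x (m y z)"
    and addL: "m (x + y) z = m x z + m y z" and addR: "m x (y + z) = m x y + m x z"
    and scL: "m (sc c x) y = sc c (m x y)" and scR: "m x (sc c y) = sc c (m x y)"
    and sc_addL: "sc (a + b) x = sc a x + sc b x" and sc_addR: "sc a (x + y) = sc a x + sc a y"
    and sc_sc: "sc a (sc b x) = sc (a * b) x" and sc_one: "sc 1 x = x"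
begin

lemma m0L[simp]: "m 0 x = 0"
  using addL[of 0 0 x] by simp
lemma m0R[simp]: "m x 0 = 0"
  using addR[of x 0 0] by simp
lemma sc0L[simp]: "sc 0 x = 0"
  using sc_addL[of 0 0 x] by simp
lemma sc0R[simp]: "sc a 0 = 0"
  using sc_addR[of a 0 0] by simp
lemma m_sumL: "m (sum f A) y = (\<Sum>a\<in>A. m (f a) y)"
  by (induction A rule: infinite_finite_induct) (auto simp: addL)
lemma m_sumR: "m y (sum f A) = (\<Sum>a\<in>A. m y (f a))"
  by (induction A rule: infinite_finite_induct) (auto simp: addR)
lemma sc_sumL: "sc (sum f A) y = (\<Sum>a\<in>A. sc (f a) y)"
  by (induction A rule: infinite_finite_induct) (auto simp: sc_addL)
lemma sc_sumR: "sc c (sum f A) = (\<Sum>a\<in>A. sc c (f a))"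
  by (induction A rule: infinite_finite_induct) (auto simp: sc_addR)
lemma sc_minusR: "sc a (x - y) = sc a x - sc a y"
  using sc_addR[of a "x - y" y] by (simp add: algebra_simps)
lemma sc_minusL: "sc (a - b) x = sc a x - sc b x"
  using sc_addL[of "a - b" b x] by (simp add: algebra_simps)
lemma m_minusL: "m (x - y) z = m x z - m y z"
  using addL[of "x - y" y z] by (simp add: algebra_simps)
lemma m_minusR: "m z (x - y) = m z x - m z y"
  using addR[of z "x - y" y] by (simp add: algebra_simps)

lemma geval_sup:
  assumes "finite S" "fsupp p \<subseteq> S"
  shows "geval m sc s p = (\<Sum>w\<in>S. sc (p w) (gwprod m s w))"
  unfolding geval_def
  by (rule sum.mono_neutral_left) (use assms in \<open>auto simp: fsupp_def\<close>)

lemma gw_append: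
  "u \<noteq> [] \<Longrightarrow> v \<noteq> [] \<Longrightarrow> gwprod m s (u @ v) = m (gwprod m s u) (gwprod m s v)"
proof (induction u)
  case Nil then show ?case by simp
next
  case (Cons x u)
  show ?case
  proof (cases u)
    case Nil
    then show ?thesis using Cons.prems by (cases v) auto
  next
    case (Cons y ys)
    then show ?thesis using Cons.IH Cons.prems by (cases v) (auto simp: assoc)
  qed
qed

lemma geval_add:
  assumes "finite (fsupp p)" "finite (fsupp q)"
  shows "geval m sc s (p + q) = geval m sc s p + geval m sc s q"
proof -
  let ?S = "fsupp p \<union> fsupp q"
  have f: "finite ?S" using assms by auto
  have "fsupp (p + q) \<subseteq> ?S" by (auto simp: fsupp_def)
  then have "geval m sc s (p + q) = (\<Sum>w\<in>?S. sc ((p + q) w) (gwprod m s w))"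
    by (rule geval_sup[OF f])
  also have "\<dots> = (\<Sum>w\<in>?S. sc (p w) (gwprod m s w)) + (\<Sum>w\<in>?S. sc (q w) (gwprod m s w))"
    by (simp add: sc_addL sum.distrib)
  also have "\<dots> = geval m sc s p + geval m sc s q"
    by (subst (1 2) geval_sup[OF f]) auto
  finally show ?thesis .
qed

lemma geval_smul:
  assumes "finite (fsupp p)"
  shows "geval m sc s (smulf c p) = sc c (geval m sc s p)"
proof -
  have "fsupp (smulf c p) \<subseteq> fsupp p" by (auto simp: fsupp_def smulf_def)
  then have "geval m sc s (smulf c p) = (\<Sum>w\<in>fsupp p. sc (smulf c p w) (gwprod m s w))"
    by (rule geval_sup[OF assms])
  also have "\<dots> = sc c (geval m sc s p)"
    by (simp add: geval_def sc_sumR sc_sc smulf_def)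
  finally show ?thesis .
qed

lemma geval_zero[simp]: "geval m sc s 0 = 0"
  by (simp add: geval_def fsupp_def)

lemma geval_zero'[simp]: "geval m sc s (\<lambda>a. 0) = 0"
  by (simp add: geval_def fsupp_def)

lemma geval_minus:
  assumes "finite (fsupp p)" "finite (fsupp q)"
  shows "geval m sc s (p - q) = geval m sc s p - geval m sc s q"
proof -
  have "p - q = p + smulf (-1) q" by (auto simp: smulf_def)
  moreover have "finite (fsupp (smulf (-1) q))" using assms(2)
    by (rule finite_subset[rotated]) (auto simp: fsupp_def smulf_def)
  ultimately have "geval m sc s (p - q) = geval m sc s p + sc (-1) (geval m sc s q)"
    using assms geval_add[of p "smulf (-1) q" s] geval_smul[of q s "-1"] by metis
  moreover have "sc (-1) x = - x" for x
    using sc_addL[of 1 "-1" x] by (simp add: sc_one eq_neg_iff_add_eq_0 add.commute)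
  ultimately show ?thesis by simp
qed

lemma geval_monw: "geval m sc s (monw w) = gwprod m s w"
  by (subst geval_sup[of "{w}"]) (auto simp: fsupp_def monw_def sc_one)

end



lemma pmul_supp: "fsupp (pmul p q) \<subseteq> (\<lambda>(u,v). u @ v) ` (fsupp p \<times> fsupp q)"
proof
  fix w assume "w \<in> fsupp (pmul p q)"
  then have "(\<Sum>i\<le>length w. p (take i w) * q (drop i w)) \<noteq> 0"
    by (simp add: fsupp_def pmul_def)
  then obtain i where "p (take i w) * q (drop i w) \<noteq> 0"
    using sum.not_neutral_contains_not_neutral by blast
  then have "(take i w, drop i w) \<in> fsupp p \<times> fsupp q" by (auto simp: fsupp_def)
  then show "w \<in> (\<lambda>(u,v). u @ v) ` (fsupp p \<times> fsupp q)"
    by (rule rev_image_eqI) simp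
qed

lemma free_algD: "p \<in> free_alg \<Longrightarrow> finite (fsupp p)" "p \<in> free_alg \<Longrightarrow> p [] = 0"
  by (auto simp: free_alg_def)

lemma pmul_free: "p \<in> free_alg \<Longrightarrow> q \<in> free_alg \<Longrightarrow> pmul p q \<in> free_alg"
  unfolding free_alg_def
  using pmul_supp[of p q] by (auto simp: pmul_def intro: finite_subset)

lemma free_alg_add:
  fixes p q :: "('k \<times> nat) list \<Rightarrow> 'f::comm_monoid_add"
  shows "p \<in> free_alg \<Longrightarrow> q \<in> free_alg \<Longrightarrow> p + q \<in> free_alg"
  unfolding free_alg_def
proof safe
  assume "finite (fsupp p)" "finite (fsupp q)"
  moreover have "fsupp (p + q) \<subseteq> fsupp p \<union> fsupp q" by (auto simp: fsupp_def)
  ultimately show "finite (fsupp (p + q))" by (meson finite_UnI finite_subset)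
qed auto

lemma free_alg_smul:
  fixes p :: "('k \<times> nat) list \<Rightarrow> 'f::mult_zero"
  shows "p \<in> free_alg \<Longrightarrow> smulf c p \<in> free_alg"
  unfolding free_alg_def
proof safe
  assume "finite (fsupp p)"
  moreover have "fsupp (smulf c p) \<subseteq> fsupp p" by (auto simp: fsupp_def smulf_def)
  ultimately show "finite (fsupp (smulf c p))" by (meson finite_subset)
qed (auto simp: smulf_def)

lemma free_alg_zero: "0 \<in> free_alg"
  unfolding free_alg_def by (auto simp: fsupp_def)

lemma free_alg_zero'[simp]: "(\<lambda>a. 0) \<in> free_alg"
  unfolding free_alg_def by (auto simp: fsupp_def)

lemma free_alg_sum: "(\<And>a. a \<in> A \<Longrightarrow> F a \<in> free_alg) \<Longrightarrow> sum F A \<in> free_alg"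
  by (induction A rule: infinite_finite_induct) (auto simp: free_alg_zero free_alg_add)

lemma free_alg_minus:
  fixes p q :: "('k \<times> nat) list \<Rightarrow> 'f::ring_1"
  shows "p \<in> free_alg \<Longrightarrow> q \<in> free_alg \<Longrightarrow> p - q \<in> free_alg"
proof -
  assume a: "p \<in> free_alg" "q \<in> free_alg"
  have "p - q = p + smulf (-1) q" by (auto simp: smulf_def)
  then show ?thesis using a free_alg_add free_alg_smul by metis
qed

lemma monw_free: "w \<noteq> [] \<Longrightarrow> monw w \<in> free_alg"
  unfolding free_alg_def by (auto simp: fsupp_def monw_def)

lemma gwprod_pmul_free:
  assumes "\<And>v. s v \<in> free_alg"
  shows "gwprod pmul s w \<in> free_alg"
  by (induction w rule: induct_list012) (auto simp: assms free_alg_zero pmul_free)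

context alg begin

lemma geval_pmul:
  assumes p: "p \<in> free_alg" and q: "q \<in> free_alg"
  shows "geval m sc s (pmul p q) = m (geval m sc s p) (geval m sc s q)"
proof -
  let ?P = "fsupp p" and ?Q = "fsupp q"
  have fP: "finite ?P" and fQ: "finite ?Q" using p q by (auto simp: free_alg_def)
  have nP: "[] \<notin> ?P" and nQ: "[] \<notin> ?Q" using p q by (auto simp: free_alg_def fsupp_def)
  let ?W = "(\<lambda>(u,v). u @ v) ` (?P \<times> ?Q)"
  have fW: "finite ?W" using fP fQ by auto
  let ?H = "\<lambda>(u,v). sc (p u * q v) (gwprod m s (u @ v))"
  let ?Sg = "Sigma ?W (\<lambda>w. {..length w})"
  let ?tk = "\<lambda>(w,i). (take i w, drop i w)"
  have fSg: "finite ?Sg" using fW by auto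
  have "geval m sc s (pmul p q) = (\<Sum>w\<in>?W. sc (pmul p q w) (gwprod m s w))"
    by (rule geval_sup[OF fW pmul_supp])
  also have "\<dots> = (\<Sum>w\<in>?W. \<Sum>i\<le>length w. ?H (take i w, drop i w))"
    by (simp add: pmul_def sc_sumL)
  also have "\<dots> = (\<Sum>(w,i)\<in>?Sg. ?H (take i w, drop i w))"
    by (rule sum.Sigma) (use fW in auto)
  also have "\<dots> = (\<Sum>x\<in>?Sg. ?H (?tk x))"
    by (rule sum.cong[OF refl]) (simp only: split_beta fst_conv snd_conv)
  also have "\<dots> = (\<Sum>y\<in>?tk ` ?Sg. ?H y)"
  proof -
    have inj: "inj_on ?tk ?Sg"
    proof (rule inj_onI, clarify)
      fix w i w' i'
      assume "i \<le> length w" "i' \<le> length w'" "take i w = take i' w'" "drop i w = drop i' w'"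
      then show "w = w' \<and> i = i'"
        by (metis append_take_drop_id length_take min.absorb2)
    qed
    show ?thesis by (rule sum.reindex_cong[OF inj refl refl, symmetric])
  qed
  also have "\<dots> = (\<Sum>y\<in>?P \<times> ?Q. ?H y)"
  proof (rule sum.mono_neutral_right)
    show "finite (?tk ` ?Sg)" using fSg by auto
    show "?P \<times> ?Q \<subseteq> ?tk ` ?Sg"
    proof clarify
      fix u v assume "u \<in> ?P" "v \<in> ?Q"
      then show "(u, v) \<in> ?tk ` ?Sg"
        by (intro rev_image_eqI[of "(u @ v, length u)"]) auto
    qed
    show "\<forall>y\<in>?tk ` ?Sg - ?P \<times> ?Q. ?H y = 0"
      by (auto simp: fsupp_def)
  qed
  also have "\<dots> = (\<Sum>u\<in>?P. \<Sum>v\<in>?Q. sc (p u) (sc (q v) (m (gwprod m s u) (gwprod m s v))))"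
    unfolding sum.cartesian_product[symmetric]
  proof (intro sum.cong refl)
    fix u v assume "u \<in> ?P" "v \<in> ?Q"
    then have "u \<noteq> []" "v \<noteq> []" using nP nQ by auto
    then show "sc (p u * q v) (gwprod m s (u @ v)) = sc (p u) (sc (q v) (m (gwprod m s u) (gwprod m s v)))"
      by (simp add: gw_append sc_sc)
  qed
  also have "\<dots> = m (geval m sc s p) (geval m sc s q)"
    apply (simp only: geval_def m_sumL m_sumR scL scR sc_sumR)
    apply (subst sum.swap)
    apply (simp add: sc_sc mult.commute)
    done
  finally show ?thesis .
qed

lemma geval_sum:
  assumes "\<And>a. a \<in> A \<Longrightarrow> F a \<in> free_alg"
  shows "geval m sc s (sum F A) = (\<Sum>a\<in>A. geval m sc s (F a))"
  using assms
proof (induction A rule: infinite_finite_induct)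
  case (insert x A)
  have "geval m sc s (sum F (insert x A)) = geval m sc s (F x + sum F A)"
    using insert.hyps by (subst sum.insert) auto
  also have "\<dots> = geval m sc s (F x) + geval m sc s (sum F A)"
    using insert.prems by (intro geval_add) (auto intro: free_algD free_alg_sum)
  also have "\<dots> = geval m sc s (F x) + (\<Sum>a\<in>A. geval m sc s (F a))"
    using insert.IH insert.prems by simp
  finally show ?case by (simp only: sum.insert[OF insert.hyps])
qed auto

lemma geval_gw_pmul:
  assumes "\<And>v. s v \<in> free_alg"
  shows "geval m sc t (gwprod pmul s w) = gwprod m (\<lambda>v. geval m sc t (s v)) w"
  by (induction w rule: induct_list012)
     (auto simp: assms geval_pmul gwprod_pmul_free)

lemma geval_comp:
  assumes "\<And>v. s v \<in> free_alg" and "finite (fsupp p)"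
  shows "geval m sc t (geval pmul smulf s p) = geval m sc (\<lambda>v. geval m sc t (s v)) p"
proof -
  have "geval m sc t (geval pmul smulf s p)
      = (\<Sum>w\<in>fsupp p. geval m sc t (smulf (p w) (gwprod pmul s w)))"
    unfolding geval_def[of pmul smulf s p]
    by (rule geval_sum) (auto intro: free_alg_smul gwprod_pmul_free assms)
  also have "\<dots> = (\<Sum>w\<in>fsupp p. sc (p w) (gwprod m (\<lambda>v. geval m sc t (s v)) w))"
    by (rule sum.cong) (auto simp: geval_smul free_algD gwprod_pmul_free assms geval_gw_pmul)
  finally show ?thesis by (simp add: geval_def)
qed

end



definition kmul :: "nat \<Rightarrow> (nat set \<Rightarrow> nat set \<Rightarrow> 'f::field) \<Rightarrow> (nat set \<Rightarrow> nat set \<Rightarrow> 'f) \<Rightarrow> (nat set \<Rightarrow> nat set \<Rightarrow> 'f)" where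
  "kmul N A B = (\<lambda>S T. \<Sum>X\<in>Pow {1..N}. A S X * B X T)"

definition ksc :: "'f::field \<Rightarrow> (nat set \<Rightarrow> nat set \<Rightarrow> 'f) \<Rightarrow> (nat set \<Rightarrow> nat set \<Rightarrow> 'f)" where
  "ksc c A = (\<lambda>S T. c * A S T)"

interpretation K: alg "kmul N" ksc
proof
  fix x y z :: "nat set \<Rightarrow> nat set \<Rightarrow> 'f::field" and c a b :: 'f
  show "kmul N (kmul N x y) z = kmul N x (kmul N y z)"
    unfolding kmul_def
    apply (rule ext)+
    apply (simp add: sum_distrib_left sum_distrib_right mult.assoc)
    apply (rule sum.swap)
    done
  show "kmul N (x + y) z = kmul N x z + kmul N y z"
    by (auto simp: kmul_def fun_eq_iff sum.distrib algebra_simps)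
  show "kmul N x (y + z) = kmul N x y + kmul N x z"
    by (auto simp: kmul_def fun_eq_iff sum.distrib algebra_simps)
  show "kmul N (ksc c x) y = ksc c (kmul N x y)"
    by (auto simp: kmul_def ksc_def fun_eq_iff sum_distrib_left algebra_simps)
  show "kmul N x (ksc c y) = ksc c (kmul N x y)"
    by (auto simp: kmul_def ksc_def fun_eq_iff sum_distrib_left algebra_simps)
  show "ksc (a + b) x = ksc a x + ksc b x"
    by (auto simp: ksc_def fun_eq_iff algebra_simps)
  show "ksc a (x + y) = ksc a x + ksc a y"
    by (auto simp: ksc_def fun_eq_iff algebra_simps)
  show "ksc a (ksc b x) = ksc (a * b) x"
    by (auto simp: ksc_def fun_eq_iff algebra_simps)
  show "ksc 1 x = x"
    by (auto simp: ksc_def fun_eq_iff algebra_simps)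
qed

definition eps :: "('h \<Rightarrow> 'h \<Rightarrow> 'f::field) \<Rightarrow> (nat \<Rightarrow> 'h) \<Rightarrow> nat \<Rightarrow> nat set \<Rightarrow> 'f" where
  "eps \<beta> d i T = (\<Prod>b\<in>{b\<in>T. b < i}. \<beta> (d i) (d b))"

definition Lg :: "('h \<Rightarrow> 'h \<Rightarrow> 'f::field) \<Rightarrow> (nat \<Rightarrow> 'h) \<Rightarrow> nat \<Rightarrow> (nat set \<Rightarrow> nat set \<Rightarrow> 'f)" where
  "Lg \<beta> d i = (\<lambda>S T. if i \<notin> T \<and> S = insert i T then eps \<beta> d i T else 0)"

lemma kmul_Lg:
  assumes "j \<in> {1..N}"
  shows "kmul N A (Lg \<beta> d j) S T = (if T \<subseteq> {1..N} \<and> j \<notin> T then A S (insert j T) * eps \<beta> d j T else 0)"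
proof -
  have "kmul N A (Lg \<beta> d j) S T = (\<Sum>X\<in>Pow {1..N}. if X = insert j T then A S X * (if j \<notin> T then eps \<beta> d j T else 0) else 0)"
    unfolding kmul_def Lg_def by (rule sum.cong) auto
  also have "\<dots> = (if insert j T \<in> Pow {1..N} then A S (insert j T) * (if j \<notin> T then eps \<beta> d j T else 0) else 0)"
    by (rule sum.delta) simp
  finally show ?thesis using assms by auto
qed

lemma eps_insert:
  assumes "finite T" "j \<notin> T"
  shows "eps \<beta> d i (insert j T) = eps \<beta> d i T * (if j < i then \<beta> (d i) (d j) else 1)"
proof (cases "j < i")
  case True
  then have "{b \<in> insert j T. b < i} = insert j {b\<in>T. b < i}" by auto
  then show ?thesis using assms True by (simp add: eps_def mult.commute)
next
  case False
  then have "{b \<in> insert j T. b < i} = {b\<in>T. b < i}" by auto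
  then show ?thesis using False by (simp add: eps_def)
qed

lemma bichar_inv:
  assumes "bicharacter \<beta>" shows "\<beta> a b * \<beta> b a = 1"
  using assms unfolding bicharacter_def by (metis inverse_inverse_eq right_inverse)

lemma bichar_add1: "bicharacter \<beta> \<Longrightarrow> \<beta> (a + b) c = \<beta> a c * \<beta> b c"
  unfolding bicharacter_def by blast
lemma bichar_add2: "bicharacter \<beta> \<Longrightarrow> \<beta> c (a + b) = \<beta> c a * \<beta> c b"
  unfolding bicharacter_def by blast

lemma Lg_comm:
  assumes B: "bicharacter \<beta>" and i: "i \<in> {1..N}" and j: "j \<in> {1..N}"
  shows "kmul N (Lg \<beta> d i) (Lg \<beta> d j) = ksc (\<beta> (d i) (d j)) (kmul N (Lg \<beta> d j) (Lg \<beta> d i))"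
proof (intro ext)
  fix S T
  have inv: "\<beta> (d i) (d j) * \<beta> (d j) (d i) = 1" by (rule bichar_inv[OF B])
  show "kmul N (Lg \<beta> d i) (Lg \<beta> d j) S T = ksc (\<beta> (d i) (d j)) (kmul N (Lg \<beta> d j) (Lg \<beta> d i)) S T"
  proof (cases "T \<subseteq> {1..N} \<and> i \<noteq> j \<and> i \<notin> T \<and> j \<notin> T \<and> S = insert i (insert j T)")
    case True
    then have fT: "finite T" by (meson finite_atLeastAtMost finite_subset)
    have e1: "eps \<beta> d i (insert j T) = eps \<beta> d i T * (if j < i then \<beta> (d i) (d j) else 1)"
      using eps_insert[OF fT] True by blast
    have e2: "eps \<beta> d j (insert i T) = eps \<beta> d j T * (if i < j then \<beta> (d j) (d i) else 1)"
      using eps_insert[OF fT] True by blast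
    have S2: "S = insert j (insert i T)" using True by auto
    show ?thesis
      using True i j e1 e2 inv
      apply (simp add: kmul_Lg ksc_def)
      by (simp add: Lg_def S2)
  next
    case False
    then show ?thesis
      using i j apply (simp add: kmul_Lg ksc_def)
      by (auto simp: Lg_def insert_commute)
  qed
qed

inductive Mk :: "nat \<Rightarrow> ('h \<Rightarrow> 'h \<Rightarrow> 'f::field) \<Rightarrow> (nat \<Rightarrow> 'h) \<Rightarrow> 'h::ab_group_add \<Rightarrow> (nat set \<Rightarrow> nat set \<Rightarrow> 'f) \<Rightarrow> bool"
  for N \<beta> d where
  zero: "Mk N \<beta> d k 0"
| gen: "i \<in> {1..N} \<Longrightarrow> d i = k \<Longrightarrow> Mk N \<beta> d k (Lg \<beta> d i)"
| add: "Mk N \<beta> d k A \<Longrightarrow> Mk N \<beta> d k B \<Longrightarrow> Mk N \<beta> d k (A + B)"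
| smul: "Mk N \<beta> d k A \<Longrightarrow> Mk N \<beta> d k (ksc c A)"
| mul: "Mk N \<beta> d k A \<Longrightarrow> Mk N \<beta> d l B \<Longrightarrow> Mk N \<beta> d (k + l) (kmul N A B)"

lemma Mk_gen_comm:
  assumes B: "bicharacter \<beta>" and "Mk N \<beta> d l Y" and i: "i \<in> {1..N}"
  shows "kmul N (Lg \<beta> d i) Y = ksc (\<beta> (d i) l) (kmul N Y (Lg \<beta> d i))"
  using assms(2)
proof induction
  case (zero k) then show ?case by (simp only: K.m0L K.m0R K.sc0R)
next
  case (gen j k) then show ?case using Lg_comm[OF B i] by auto
next
  case (add k A B') then show ?case by (simp only: K.addR K.addL K.sc_addR)
next
  case (smul k A c) then show ?case by (simp add: K.scR K.scL K.sc_sc mult.commute)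
next
  case (mul k A l B')
  have "kmul N (Lg \<beta> d i) (kmul N A B') = kmul N (kmul N (Lg \<beta> d i) A) B'"
    by (simp add: K.assoc)
  also have "\<dots> = ksc (\<beta> (d i) k) (kmul N A (kmul N (Lg \<beta> d i) B'))"
    using mul by (simp add: K.scL K.assoc)
  also have "\<dots> = ksc (\<beta> (d i) k * \<beta> (d i) l) (kmul N (kmul N A B') (Lg \<beta> d i))"
    using mul by (simp add: K.scR K.sc_sc K.assoc)
  finally show ?case by (simp add: bichar_add2[OF B])
qed

lemma Mk_comm:
  assumes B: "bicharacter \<beta>" and "Mk N \<beta> d k X"
  shows "Mk N \<beta> d l Y \<Longrightarrow> kmul N X Y = ksc (\<beta> k l) (kmul N Y X)"
  using assms(2)
proof (induction arbitrary: l Y)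
  case (zero k) then show ?case by (simp only: K.m0L K.m0R K.sc0R)
next
  case (gen i k) then show ?case using Mk_gen_comm[OF B] by blast
next
  case (add k A B') then show ?case by (simp only: K.addR K.addL K.sc_addR)
next
  case (smul k A c) then show ?case by (simp add: K.scR K.scL K.sc_sc mult.commute)
next
  case (mul k A k' B')
  have IH1: "kmul N A Y = ksc (\<beta> k l) (kmul N Y A)" using mul by blast
  have IH2: "kmul N B' Y = ksc (\<beta> k' l) (kmul N Y B')" using mul by blast
  have "kmul N (kmul N A B') Y = kmul N A (kmul N B' Y)"
    by (simp only: K.assoc)
  also have "\<dots> = ksc (\<beta> k' l) (kmul N (kmul N A Y) B')"
    by (simp only: IH2 K.scR K.assoc)
  also have "\<dots> = ksc (\<beta> k' l * \<beta> k l) (kmul N Y (kmul N A B'))"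
    by (simp only: IH1 K.scL K.sc_sc K.assoc)
  finally show ?case by (simp add: bichar_add1[OF B] mult.commute)
qed

lemma Mk_sum: "(\<And>a. a \<in> A \<Longrightarrow> Mk N \<beta> d k (f a)) \<Longrightarrow> Mk N \<beta> d k (sum f A)"
  by (induction A rule: infinite_finite_induct) (auto intro: Mk.intros)

lemma Mk_gw:
  assumes "\<And>k i. Mk N \<beta> d k (t (k, i))"
  shows "Mk N \<beta> d (word_deg w) (gwprod (kmul N) t w)"
proof (induction w rule: induct_list012)
  case 1 then show ?case by (simp only: gwprod.simps Mk.zero)
next
  case (2 x) then show ?case using assms by (cases x) (simp add: word_deg_def)
next
  case (3 x y zs)
  have "word_deg (x # y # zs) = fst x + word_deg (y # zs)" by (simp add: word_deg_def)
  then show ?case using 3 assms by (cases x) (auto intro: Mk.mul)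
qed

lemma Mk_geval_homog:
  assumes "\<And>k i. Mk N \<beta> d k (t (k, i))" and "q \<in> homog k"
  shows "Mk N \<beta> d k (geval (kmul N) ksc t q)"
  unfolding geval_def
  using assms Mk_gw[OF assms(1)] by (auto intro!: Mk_sum Mk.smul simp: homog_def)




lemma beta_comm_free: "beta_comm \<beta> h k \<in> free_alg"
  unfolding beta_comm_def by (intro free_alg_minus free_alg_smul monw_free) auto

lemma Tideal_free:
  assumes "S \<subseteq> free_alg" "p \<in> Tideal S"
  shows "p \<in> free_alg"
  using assms(2)
proof induction
  case (endo p s)
  have sv: "s v \<in> free_alg" for v
    using endo.hyps(2) by (cases v) (auto simp: homog_def)
  show ?case unfolding geval_def
    by (intro free_alg_sum free_alg_smul gwprod_pmul_free sv)
next
  case (add p q) then show ?case by (intro free_alg_add) auto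
qed (use assms(1) in \<open>auto intro: free_alg_zero free_alg_smul pmul_free\<close>)

lemma bct_free: "p \<in> beta_comm_Tideal \<beta> \<Longrightarrow> p \<in> free_alg"
  unfolding beta_comm_Tideal_def by (rule Tideal_free) (auto intro: beta_comm_free)

lemma fin: "r \<in> Tideal {beta_comm \<beta> h k |h k. True} \<Longrightarrow> r \<in> free_alg"
  by (rule Tideal_free) (auto intro: beta_comm_free)

lemma Tideal_M:
  fixes \<beta> :: "'h::ab_group_add \<Rightarrow> 'h \<Rightarrow> 'f::field"
  assumes B: "bicharacter \<beta>" and p: "p \<in> beta_comm_Tideal \<beta>"
  shows "\<forall>t. (\<forall>k i. Mk N \<beta> d k (t (k, i))) \<longrightarrow> geval (kmul N) ksc t p = 0"
  using p unfolding beta_comm_Tideal_def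
proof induction

  case (gen p)
  then obtain h k where pe: "p = beta_comm \<beta> h k" by blast
  show ?case
  proof (intro allI impI)
    fix t :: "'h \<times> nat \<Rightarrow> nat set \<Rightarrow> nat set \<Rightarrow> 'f"
    assume t: "\<forall>k i. Mk N \<beta> d k (t (k, i))"
    have f1: "finite (fsupp (monw [(h, 1::nat), (k, 2)] :: ('h \<times> nat) list \<Rightarrow> 'f))"
      by (rule free_algD(1)[OF monw_free]) simp
    have f2: "finite (fsupp (smulf (\<beta> h k) (monw [(k, 2::nat), (h, 1)] :: ('h \<times> nat) list \<Rightarrow> 'f)))"
      by (rule free_algD(1)[OF free_alg_smul[OF monw_free]]) simp
    have f3: "finite (fsupp (monw [(k, 2::nat), (h, 1)] :: ('h \<times> nat) list \<Rightarrow> 'f))"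
      by (rule free_algD(1)[OF monw_free]) simp
    have "geval (kmul N) ksc t p = kmul N (t (h,1)) (t (k,2)) - ksc (\<beta> h k) (kmul N (t (k,2)) (t (h,1)))"
      unfolding pe beta_comm_def
      by (simp only: K.geval_minus[OF f1 f2] K.geval_smul[OF f3] K.geval_monw gwprod.simps)
    also have "\<dots> = 0"
      using Mk_comm[OF B, of N d h "t (h,1)" k "t (k,2)"] t by simp
    finally show "geval (kmul N) ksc t p = 0" .
  qed
next
  case zero then show ?case by simp
next
  case (add p q)
  have fp: "finite (fsupp p)" and fq: "finite (fsupp q)"
    using add.hyps fin free_algD(1) by blast+
  show ?case
  proof (intro allI impI)
    fix t :: "'h \<times> nat \<Rightarrow> nat set \<Rightarrow> nat set \<Rightarrow> 'f"
    assume t: "\<forall>k i. Mk N \<beta> d k (t (k, i))"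
    have "geval (kmul N) ksc t p = 0" "geval (kmul N) ksc t q = 0" using add.IH t by blast+
    then show "geval (kmul N) ksc t (p + q) = 0" by (simp only: K.geval_add[OF fp fq] add_0)
  qed
next
  case (smul p c)
  have fp: "finite (fsupp p)"
    using smul.hyps fin free_algD(1) by blast
  show ?case
  proof (intro allI impI)
    fix t :: "'h \<times> nat \<Rightarrow> nat set \<Rightarrow> nat set \<Rightarrow> 'f"
    assume t: "\<forall>k i. Mk N \<beta> d k (t (k, i))"
    have "geval (kmul N) ksc t p = 0" using smul.IH t by blast
    then show "geval (kmul N) ksc t (smulf c p) = 0" by (simp only: K.geval_smul[OF fp] K.sc0R)
  qed
next
  case (mult_left p q)
  have fp: "p \<in> free_alg" using mult_left.hyps fin by blast
  show ?case
  proof (intro allI impI)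
    fix t :: "'h \<times> nat \<Rightarrow> nat set \<Rightarrow> nat set \<Rightarrow> 'f"
    assume t: "\<forall>k i. Mk N \<beta> d k (t (k, i))"
    have "geval (kmul N) ksc t p = 0" using mult_left.IH t by blast
    then show "geval (kmul N) ksc t (pmul q p) = 0" by (simp only: K.geval_pmul[OF mult_left.hyps(2) fp] K.m0R)
  qed
next
  case (mult_right p q)
  have fp: "p \<in> free_alg" using mult_right.hyps fin by blast
  show ?case
  proof (intro allI impI)
    fix t :: "'h \<times> nat \<Rightarrow> nat set \<Rightarrow> nat set \<Rightarrow> 'f"
    assume t: "\<forall>k i. Mk N \<beta> d k (t (k, i))"
    have "geval (kmul N) ksc t p = 0" using mult_right.IH t by blast
    then show "geval (kmul N) ksc t (pmul p q) = 0" by (simp only: K.geval_pmul[OF fp mult_right.hyps(2)] K.m0L)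
  qed
next
  case (endo p s)
  have sv: "s v \<in> free_alg" for v
    using endo.hyps(2) by (cases v) (auto simp: homog_def)
  have fp: "finite (fsupp p)"
    using endo.hyps(1) fin free_algD(1) by blast
  show ?case
  proof (intro allI impI)
    fix t :: "'h \<times> nat \<Rightarrow> nat set \<Rightarrow> nat set \<Rightarrow> 'f"
    assume t: "\<forall>k i. Mk N \<beta> d k (t (k, i))"
    have "\<forall>k i. Mk N \<beta> d k (geval (kmul N) ksc t (s (k, i)))"
      using Mk_geval_homog t endo.hyps(2) by blast
    then have "geval (kmul N) ksc (\<lambda>v. geval (kmul N) ksc t (s v)) p = 0"
      by (intro mp[OF spec[OF endo.IH, of "\<lambda>v. geval (kmul N) ksc t (s v)"]]) simp
    then show "geval (kmul N) ksc t (geval pmul smulf s p) = 0"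
      by (simp only: K.geval_comp[OF sv fp])
  qed
qed

lemma gw_cons: "xs \<noteq> [] \<Longrightarrow> gwprod m s (x # xs) = m (s x) (gwprod m s xs)"
  by (cases xs) auto

definition t0 :: "nat \<Rightarrow> ('h \<Rightarrow> 'h \<Rightarrow> 'f::field) \<Rightarrow> (nat \<Rightarrow> 'h) \<Rightarrow> 'h \<times> nat \<Rightarrow> (nat set \<Rightarrow> nat set \<Rightarrow> 'f)" where
  "t0 N \<beta> h = (\<lambda>(k, i). if i \<in> {1..N} \<and> k = h i then Lg \<beta> h i else 0)"

lemma t0_Mk: "Mk N \<beta> h k (t0 N \<beta> h (k, i))"
  unfolding t0_def by (auto intro: Mk.intros)

lemma chain_entry:
  assumes "1 \<le> a" "a \<le> N"
  shows "gwprod (kmul N) (t0 N \<beta> h) (map (\<lambda>j. (h j, j)) [a..<N+1]) {a..N} {} = 1"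
  using assms(2,1)
proof (induction a rule: inc_induct)
  case base
  then show ?case by (simp add: t0_def Lg_def eps_def)
next
  case (step a)
  let ?G = "gwprod (kmul N) (t0 N \<beta> h) (map (\<lambda>j. (h j, j)) [Suc a..<N+1])"
  have ne: "[Suc a..<N+1] \<noteq> []" using step by simp
  have "[a..<N+1] = a # [Suc a..<N+1]" using step by (simp add: upt_conv_Cons)
  then have "gwprod (kmul N) (t0 N \<beta> h) (map (\<lambda>j. (h j, j)) [a..<N+1]) = kmul N (Lg \<beta> h a) ?G"
    using ne step by (simp add: gw_cons t0_def)
  moreover have "kmul N (Lg \<beta> h a) ?G {a..N} {} = ?G {Suc a..N} {}"
  proof -
    have "kmul N (Lg \<beta> h a) ?G {a..N} {} = (\<Sum>X\<in>Pow {1..N}. Lg \<beta> h a {a..N} X * ?G X {})"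
      by (simp add: kmul_def)
    also have "\<dots> = (\<Sum>X\<in>Pow {1..N}. if X = {Suc a..N} then ?G X {} else 0)"
    proof (rule sum.cong[OF refl])
      fix X assume "X \<in> Pow {1..N}"
      have c: "(a \<notin> X \<and> {a..N} = insert a X) \<longleftrightarrow> X = {Suc a..N}"
      proof
        assume H: "a \<notin> X \<and> {a..N} = insert a X"
        then have "X = {a..N} - {a}" by blast
        also have "\<dots> = {Suc a..N}" by auto
        finally show "X = {Suc a..N}" .
      next
        assume "X = {Suc a..N}" then show "a \<notin> X \<and> {a..N} = insert a X" using step by auto
      qed
      have e: "eps \<beta> h a {Suc a..N} = 1"
      proof -
        have "{b\<in>{Suc a..N}. b < a} = {}" by auto
        then show ?thesis unfolding eps_def by (simp only: prod.empty)
      qed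
      show "Lg \<beta> h a {a..N} X * ?G X {} = (if X = {Suc a..N} then ?G X {} else 0)"
        unfolding Lg_def using c e by auto
    qed
    also have "\<dots> = ?G {Suc a..N} {}"
      using step by (subst sum.delta) auto
    finally show ?thesis .
  qed
  ultimately show ?case using step by simp
qed

lemma monw_notin:
  fixes \<beta> :: "'h::ab_group_add \<Rightarrow> 'h \<Rightarrow> 'f::field"
  assumes B: "bicharacter \<beta>" and N: "1 \<le> N"
  shows "(monw (perm_word N h id) :: ('h \<times> nat) list \<Rightarrow> 'f) \<notin> beta_comm_Tideal \<beta>"
proof
  assume "(monw (perm_word N h id) :: ('h \<times> nat) list \<Rightarrow> 'f) \<in> beta_comm_Tideal \<beta>"
  from Tideal_M[OF B this, of N h] t0_Mk
  have "geval (kmul N) ksc (t0 N \<beta> h) (monw (perm_word N h id) :: ('h \<times> nat) list \<Rightarrow> 'f) = 0"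
    by blast
  then have "gwprod (kmul N) (t0 N \<beta> h) (map (\<lambda>j. (h j, j)) [1..<N+1]) = 0"
    by (simp add: K.geval_monw perm_word_def)
  then have "gwprod (kmul N) (t0 N \<beta> h) (map (\<lambda>j. (h j, j)) [1..<N+1]) {1..N} {} = 0"
    by simp
  with chain_entry[OF order_refl N, of \<beta> h] show False by (metis one_neq_zero)
qed




lemma ga_alg:
  fixes sc :: "'f::field \<Rightarrow> 'a::ring \<Rightarrow> 'a"
  assumes "graded_algebra sc A"
  shows "alg (*) sc"
proof -
  interpret V: vector_space sc using assms unfolding graded_algebra_def by blast
  have S: "\<forall>c x y. sc c (x * y) = sc c x * y \<and> sc c (x * y) = x * sc c y"
    using assms unfolding graded_algebra_def by blast
  show ?thesis
  proof
    fix x y z :: 'a and c a b :: 'f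
    show "x * y * z = x * (y * z)" by (simp add: mult.assoc)
    show "(x + y) * z = x * z + y * z" by (simp add: distrib_right)
    show "x * (y + z) = x * y + x * z" by (simp add: distrib_left)
    show "sc c x * y = sc c (x * y)" using S by metis
    show "x * sc c y = sc c (x * y)" using S by metis
    show "sc (a + b) x = sc a x + sc b x" by (rule V.scale_left_distrib)
    show "sc a (x + y) = sc a x + sc a y" by (rule V.scale_right_distrib)
    show "sc a (sc b x) = sc (a * b) x" by simp
    show "sc 1 x = x" by simp
  qed
qed

lemma ga_facts:
  fixes sc :: "'f::field \<Rightarrow> 'a::ring \<Rightarrow> 'a"
  assumes "graded_algebra sc A"
  shows "\<And>x y. x \<in> A k \<Longrightarrow> y \<in> A l \<Longrightarrow> x * y \<in> A (k + l)"
  using assms unfolding graded_algebra_def by blast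

lemma bc_swap:
  assumes "beta_commutative \<beta> sc A" "a \<in> A h" "b \<in> A k"
  shows "a * b = sc (\<beta> h k) (b * a)"
  using assms unfolding beta_commutative_def by (metis eq_iff_diff_eq_0)

lemma gw_cons': "xs \<noteq> [] \<Longrightarrow> gwprod m s (x # xs) = m (s x) (gwprod m s xs)"
  by (cases xs) auto

lemma insort_lemma:
  fixes sc :: "'f::field \<Rightarrow> 'a::ring \<Rightarrow> 'a" and \<beta> :: "'h::ab_group_add \<Rightarrow> 'h \<Rightarrow> 'f"
  assumes GA: "graded_algebra sc A" and BC: "beta_commutative \<beta> sc A" and B: "bicharacter \<beta>"
  shows "v \<noteq> [] \<Longrightarrow> \<exists>\<nu>. \<nu> \<noteq> 0 \<and> (\<forall>s. graded_subst A s \<longrightarrow>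
      s x * gwprod (*) s v = sc \<nu> (gwprod (*) s (insort_key snd x v)))"
proof (induction v)
  case Nil then show ?case by simp
next
  case (Cons y v')
  interpret C: alg "(*)" sc by (rule ga_alg[OF GA])
  have gs: "graded_subst A s \<Longrightarrow> s z \<in> A (fst z)" for s z
    unfolding graded_subst_def by (cases z) auto
  have bne: "\<beta> a b \<noteq> 0" for a b using B unfolding bicharacter_def by blast
  show ?case
  proof (cases "snd x \<le> snd y")
    case True
    then show ?thesis
      by (intro exI[of _ 1]) (simp add: C.sc_one gw_cons')
  next
    case False
    show ?thesis
    proof (cases "v' = []")
      case True
      show ?thesis
      proof (intro exI[of _ "\<beta> (fst x) (fst y)"] conjI allI impI)
        show "\<beta> (fst x) (fst y) \<noteq> 0" by (rule bne)
        fix s assume s: "graded_subst A s"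
        show "s x * gwprod (*) s (y # v') = sc (\<beta> (fst x) (fst y)) (gwprod (*) s (insort_key snd x (y # v')))"
          using False True by (simp add: bc_swap[OF BC gs[OF s, of x] gs[OF s, of y]])
      qed
    next
      case vne: False
      obtain \<nu> where nu: "\<nu> \<noteq> 0" "\<And>s. graded_subst A s \<Longrightarrow>
          s x * gwprod (*) s v' = sc \<nu> (gwprod (*) s (insort_key snd x v'))"
        using Cons.IH vne by blast
      have ine: "insort_key snd x v' \<noteq> []" by (cases v') auto
      show ?thesis
      proof (intro exI[of _ "\<beta> (fst x) (fst y) * \<nu>"] conjI allI impI)
        show "\<beta> (fst x) (fst y) * \<nu> \<noteq> 0" using nu bne by simp
        fix s assume s: "graded_subst A s"
        have "s x * gwprod (*) s (y # v') = (s x * s y) * gwprod (*) s v'"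
          using vne by (simp add: gw_cons' mult.assoc)
        also have "\<dots> = sc (\<beta> (fst x) (fst y)) (s y * (s x * gwprod (*) s v'))"
          by (simp add: bc_swap[OF BC gs[OF s, of x] gs[OF s, of y]] C.scL mult.assoc)
        also have "\<dots> = sc (\<beta> (fst x) (fst y) * \<nu>) (s y * gwprod (*) s (insort_key snd x v'))"
          by (simp add: nu(2)[OF s] C.scR C.sc_sc)
        also have "\<dots> = sc (\<beta> (fst x) (fst y) * \<nu>) (gwprod (*) s (insort_key snd x (y # v')))"
          using False ine by (simp add: gw_cons')
        finally show "s x * gwprod (*) s (y # v') = sc (\<beta> (fst x) (fst y) * \<nu>) (gwprod (*) s (insort_key snd x (y # v')))" .
      qed
    qed
  qed
qed

lemma sort_lemma:
  fixes sc :: "'f::field \<Rightarrow> 'a::ring \<Rightarrow> 'a" and \<beta> :: "'h::ab_group_add \<Rightarrow> 'h \<Rightarrow> 'f"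
  assumes GA: "graded_algebra sc A" and BC: "beta_commutative \<beta> sc A" and B: "bicharacter \<beta>"
  shows "u \<noteq> [] \<Longrightarrow> \<exists>\<mu>. \<mu> \<noteq> 0 \<and> (\<forall>s. graded_subst A s \<longrightarrow>
      gwprod (*) s u = sc \<mu> (gwprod (*) s (sort_key snd u)))"
proof (induction u)
  case Nil then show ?case by simp
next
  case (Cons x xs)
  interpret C: alg "(*)" sc by (rule ga_alg[OF GA])
  show ?case
  proof (cases "xs = []")
    case True then show ?thesis by (intro exI[of _ 1]) (simp add: C.sc_one)
  next
    case False
    obtain \<mu> where mu: "\<mu> \<noteq> 0" "\<And>s. graded_subst A s \<Longrightarrow>
        gwprod (*) s xs = sc \<mu> (gwprod (*) s (sort_key snd xs))"
      using Cons.IH False by blast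
    have sne: "sort_key snd xs \<noteq> []" using False by (cases xs) auto
    obtain \<nu> where nu: "\<nu> \<noteq> 0" "\<And>s. graded_subst A s \<Longrightarrow>
        s x * gwprod (*) s (sort_key snd xs) = sc \<nu> (gwprod (*) s (insort_key snd x (sort_key snd xs)))"
      using insort_lemma[OF GA BC B sne, of x] by blast
    show ?thesis
    proof (intro exI[of _ "\<mu> * \<nu>"] conjI allI impI)
      show "\<mu> * \<nu> \<noteq> 0" using mu nu by simp
      fix s assume s: "graded_subst A s"
      have "gwprod (*) s (x # xs) = s x * gwprod (*) s xs" using False by (simp add: gw_cons')
      also have "\<dots> = sc (\<mu> * \<nu>) (gwprod (*) s (sort_key snd (x # xs)))"
        by (simp add: mu(2)[OF s] nu(2)[OF s] C.scR C.sc_sc)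
      finally show "gwprod (*) s (x # xs) = sc (\<mu> * \<nu>) (gwprod (*) s (sort_key snd (x # xs)))" .
    qed
  qed
qed




lemma set_perm_word:
  assumes "\<sigma> permutes {1..n}"
  shows "set (perm_word n h \<sigma>) = (\<lambda>j. (h j, j)) ` {1..n}"
proof -
  have "set (perm_word n h \<sigma>) = (\<lambda>j. (h j, j)) ` (\<sigma> ` {1..n})"
    unfolding perm_word_def by (auto simp: image_image)
  also have "\<sigma> ` {1..n} = {1..n}" by (rule permutes_image[OF assms])
  finally show ?thesis .
qed

lemma perm_sort:
  assumes "\<sigma> permutes {1..n}"
  shows "sort_key snd (perm_word n h \<sigma>) = perm_word n h id"
proof (rule map_sorted_distinct_set_unique[where f = snd])
  have idp: "id permutes {1..n}" by (rule permutes_id)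
  have S: "set (sort_key snd (perm_word n h \<sigma>)) = (\<lambda>j. (h j, j)) ` {1..n}"
    using set_perm_word[OF assms] by simp
  have S2: "set (perm_word n h id) = (\<lambda>j. (h j, j)) ` {1..n}"
    using set_perm_word[OF idp] by simp
  have inj: "inj_on snd ((\<lambda>j. (h j, j)) ` {1..n})" by (auto simp: inj_on_def)
  show "inj_on snd (set (sort_key snd (perm_word n h \<sigma>)) \<union> set (perm_word n h id))"
    using S S2 inj by simp
  show "sorted (map snd (sort_key snd (perm_word n h \<sigma>)))" by (rule sorted_sort_key)
  have "distinct (map snd (perm_word n h \<sigma>))"
  proof -
    have "map snd (perm_word n h \<sigma>) = map \<sigma> [1..<n+1]" by (simp add: perm_word_def)
    moreover have "inj_on \<sigma> (set [1..<n+1])"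
      using permutes_inj[OF assms] by (auto intro: inj_on_subset)
    ultimately show ?thesis by (simp add: distinct_map)
  qed
  then have "distinct (perm_word n h \<sigma>)" "inj_on snd (set (perm_word n h \<sigma>))"
    by (simp_all add: distinct_map)
  then show "distinct (map snd (sort_key snd (perm_word n h \<sigma>)))"
    by (simp add: distinct_map)
  have ms: "map snd (perm_word n h id) = [1..<n+1]"
    unfolding perm_word_def by (simp add: o_def del: upt_Suc)
  show "sorted (map snd (perm_word n h id))" unfolding ms by (rule sorted_upt)
  show "distinct (map snd (perm_word n h id))" unfolding ms by (rule distinct_upt)
  show "set (sort_key snd (perm_word n h \<sigma>)) = set (perm_word n h id)" using S S2 by simp
qed

lemma perm_word_ne: "1 \<le> n \<Longrightarrow> perm_word n h \<sigma> \<noteq> []"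
  by (simp add: perm_word_def)

lemma tideal_add: "p \<in> beta_comm_Tideal \<beta> \<Longrightarrow> q \<in> beta_comm_Tideal \<beta> \<Longrightarrow> p + q \<in> beta_comm_Tideal \<beta>"
  unfolding beta_comm_Tideal_def by (rule Tideal.add)
lemma tideal_smul: "p \<in> beta_comm_Tideal \<beta> \<Longrightarrow> smulf c p \<in> beta_comm_Tideal \<beta>"
  unfolding beta_comm_Tideal_def by (rule Tideal.smul)

lemma zeta_exists:
  fixes sC :: "'f::field \<Rightarrow> 'c::ring \<Rightarrow> 'c" and \<beta> :: "'h::ab_group_add \<Rightarrow> 'h \<Rightarrow> 'f"
  assumes GA: "graded_algebra sC Cg" and BC: "beta_commutative \<beta> sC Cg" and B: "bicharacter \<beta>"
    and GEN: "generates_beta_variety \<beta> sC Cg"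
    and n: "1 \<le> n" and \<sigma>: "\<sigma> permutes {1..n}"
  shows "\<exists>c. monw (perm_word n h id) - smulf c (monw (perm_word n h \<sigma>)) \<in> beta_comm_Tideal \<beta>"
proof -
  interpret C: alg "(*)" sC by (rule ga_alg[OF GA])
  let ?A = "perm_word n h id" and ?S = "perm_word n h \<sigma>"
  obtain \<mu> where mu: "\<mu> \<noteq> 0" "\<And>s. graded_subst Cg s \<Longrightarrow> gwprod (*) s ?S = sC \<mu> (gwprod (*) s ?A)"
    using sort_lemma[OF GA BC B perm_word_ne[OF n]] perm_sort[OF \<sigma>] by metis
  have fA: "finite (fsupp (monw ?A :: ('h \<times> nat) list \<Rightarrow> 'f))"
    by (rule free_algD(1)[OF monw_free[OF perm_word_ne[OF n]]])
  have fS: "finite (fsupp (monw ?S :: ('h \<times> nat) list \<Rightarrow> 'f))"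
    by (rule free_algD(1)[OF monw_free[OF perm_word_ne[OF n]]])
  have fcS: "finite (fsupp (smulf (inverse \<mu>) (monw ?S) :: ('h \<times> nat) list \<Rightarrow> 'f))"
    by (rule free_algD(1)[OF free_alg_smul[OF monw_free[OF perm_word_ne[OF n]]]])
  have "monw ?A - smulf (inverse \<mu>) (monw ?S) \<in> TG sC Cg"
    unfolding TG_def
  proof (intro CollectI conjI allI impI)
    show "monw ?A - smulf (inverse \<mu>) (monw ?S) \<in> free_alg"
      by (intro free_alg_minus free_alg_smul monw_free perm_word_ne[OF n])
    fix s assume s: "graded_subst Cg s"
    show "geval (*) sC s (monw ?A - smulf (inverse \<mu>) (monw ?S)) = 0"
      by (simp only: C.geval_minus[OF fA fcS] C.geval_smul[OF fS] C.geval_monw mu(2)[OF s] C.sc_sc)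
         (simp add: mu(1) C.sc_one)
  qed
  then show ?thesis using GEN unfolding generates_beta_variety_def by blast
qed

lemma proj_lift: "map (\<lambda>((a, b), i). (b, i)) (lift_word h (perm_word n g \<sigma>)) = perm_word n h \<sigma>"
  by (simp add: lift_word_def perm_word_def)

lemma zeta_props:
  fixes sC :: "'f::field \<Rightarrow> 'c::ring \<Rightarrow> 'c" and \<beta> :: "'h::ab_group_add \<Rightarrow> 'h \<Rightarrow> 'f"
    and g :: "nat \<Rightarrow> 'g"
  assumes GA: "graded_algebra sC Cg" and BC: "beta_commutative \<beta> sC Cg" and B: "bicharacter \<beta>"
    and GEN: "generates_beta_variety \<beta> sC Cg"
    and n: "1 \<le> n" and \<sigma>: "\<sigma> permutes {1..n}"
  shows "zeta_coef \<beta> (lift_word h (perm_word n g \<sigma>)) \<noteq> 0 \<and>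
    monw (perm_word n h id) - smulf (zeta_coef \<beta> (lift_word h (perm_word n g \<sigma>))) (monw (perm_word n h \<sigma>))
      \<in> beta_comm_Tideal \<beta>"
proof -
  let ?A = "perm_word n h id" and ?S = "perm_word n h \<sigma>"
  let ?P = "\<lambda>c. (monw ?A - smulf c (monw ?S) :: ('h \<times> nat) list \<Rightarrow> 'f) \<in> beta_comm_Tideal \<beta>"
  have zc: "zeta_coef \<beta> (lift_word h (perm_word n g \<sigma>)) = (THE c. ?P c)"
    unfolding zeta_coef_def Let_def proj_lift perm_sort[OF \<sigma>] ..
  have notA: "(monw ?A :: ('h \<times> nat) list \<Rightarrow> 'f) \<notin> beta_comm_Tideal \<beta>"
    by (rule monw_notin[OF B n])
  have notS: "(monw ?S :: ('h \<times> nat) list \<Rightarrow> 'f) \<notin> beta_comm_Tideal \<beta>"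
  proof
    assume S: "(monw ?S :: ('h \<times> nat) list \<Rightarrow> 'f) \<in> beta_comm_Tideal \<beta>"
    obtain c where c: "?P c" using zeta_exists[OF GA BC B GEN n \<sigma>] by blast
    have "monw ?A = (monw ?A - smulf c (monw ?S)) + smulf c (monw ?S :: ('h \<times> nat) list \<Rightarrow> 'f)"
      by simp
    also have "\<dots> \<in> beta_comm_Tideal \<beta>" by (intro tideal_add tideal_smul c S)
    finally show False using notA by simp
  qed
  have ex1: "\<exists>!c. ?P c"
  proof -
    obtain c where c: "?P c" using zeta_exists[OF GA BC B GEN n \<sigma>] by blast
    moreover have "c' = c" if c': "?P c'" for c'
    proof (rule ccontr)
      assume ne: "c' \<noteq> c"
      have "smulf (inverse (c - c')) ((monw ?A - smulf c' (monw ?S)) + smulf (-1) (monw ?A - smulf c (monw ?S)))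
          \<in> beta_comm_Tideal \<beta>"
        by (intro tideal_smul tideal_add c c')
      moreover have "smulf (inverse (c - c')) ((monw ?A - smulf c' (monw ?S)) + smulf (-1) (monw ?A - smulf c (monw ?S)))
          = (monw ?S :: ('h \<times> nat) list \<Rightarrow> 'f)"
      proof (rule ext)
        fix x
        have e: "(monw ?A x - c' * monw ?S x) + (-1) * (monw ?A x - c * (monw ?S x :: 'f)) = (c - c') * monw ?S x"
          by (simp add: algebra_simps)
        have ne': "c - c' \<noteq> 0" using ne by simp
        show "smulf (inverse (c - c')) ((monw ?A - smulf c' (monw ?S)) + smulf (-1) (monw ?A - smulf c (monw ?S))) x
          = (monw ?S x :: 'f)"
          unfolding smulf_def plus_fun_apply minus_apply e using ne' by simp
      qed
      ultimately show False using notS by simp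
    qed
    ultimately show ?thesis by blast
  qed
  have P: "?P (THE c. ?P c)" by (rule theI'[OF ex1])
  have nz: "(THE c. ?P c) \<noteq> 0"
  proof
    assume "(THE c. ?P c) = 0"
    with P have "?P 0" by simp
    moreover have "monw ?A - smulf 0 (monw ?S) = (monw ?A :: ('h \<times> nat) list \<Rightarrow> 'f)"
      by (rule ext) (simp add: smulf_def)
    ultimately show False using notA by simp
  qed
  show ?thesis using P nz zc by simp
qed




lemma functional_exists:
  fixes sc :: "'f::field \<Rightarrow> 'a::ab_group_add \<Rightarrow> 'a"
  assumes VS: "vector_space sc" and x: "x \<noteq> 0"
  shows "\<exists>\<phi>. (\<forall>a b. \<phi> (a + b) = \<phi> a + \<phi> b) \<and> (\<forall>c a. \<phi> (sc c a) = c * \<phi> a) \<and> \<phi> x = 1"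
proof -
  have VF: "vector_space ((*) :: 'f \<Rightarrow> 'f \<Rightarrow> 'f)"
    by unfold_locales (auto simp: algebra_simps)
  interpret VP: vector_space_pair sc "(*) :: 'f \<Rightarrow> 'f \<Rightarrow> 'f"
    by (intro vector_space_pair.intro VS VF)
  have ind: "VP.vs1.independent {x}"
    using x by (intro VP.vs1.independent_insertI) (auto simp: VP.vs1.independent_empty)
  note lin = VP.linear_construct[OF ind, of "\<lambda>_. 1"]
  show ?thesis
    by (intro exI[of _ "VP.construct {x} (\<lambda>_. 1)"] conjI allI)
       (auto simp: VP.linear_add[OF lin] VP.linear_scale[OF lin] VP.construct_basis[OF ind])
qed

definition Lf :: "('p \<Rightarrow> 'f::field) \<Rightarrow> ('p \<Rightarrow> 'f) \<Rightarrow> 'f" where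
  "Lf w z = (\<Sum>p\<in>fsupp z. z p * w p)"

lemma Lf_sup: "finite S \<Longrightarrow> fsupp z \<subseteq> S \<Longrightarrow> Lf w z = (\<Sum>p\<in>S. z p * w p)"
  unfolding Lf_def by (rule sum.mono_neutral_left) (auto simp: fsupp_def)

lemma Lf_add: "finite (fsupp x) \<Longrightarrow> finite (fsupp y) \<Longrightarrow> Lf w (x + y) = Lf w x + Lf w y"
proof -
  assume f: "finite (fsupp x)" "finite (fsupp y)"
  let ?S = "fsupp x \<union> fsupp y"
  have "Lf w (x + y) = (\<Sum>p\<in>?S. (x + y) p * w p)"
    by (rule Lf_sup) (use f in \<open>auto simp: fsupp_def\<close>)
  also have "\<dots> = (\<Sum>p\<in>?S. x p * w p) + (\<Sum>p\<in>?S. y p * w p)"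
    by (simp add: sum.distrib algebra_simps)
  also have "\<dots> = Lf w x + Lf w y"
    using f by (subst (1 2) Lf_sup[of ?S]) auto
  finally show ?thesis .
qed

lemma Lf_smul: "Lf w (smulf c x) = c * Lf w x"
proof (cases "c = 0")
  case True then show ?thesis by (simp add: Lf_def smulf_def fsupp_def)
next
  case False
  then have "fsupp (smulf c x) = fsupp x" by (auto simp: fsupp_def smulf_def)
  then show ?thesis by (simp add: Lf_def smulf_def sum_distrib_left mult.assoc)
qed

lemma fsupp_tpure: "fsupp (tpure a b :: _ \<Rightarrow> 'f::zero_neq_one) = {(a, b)}"
  by (auto simp: fsupp_def tpure_def monw_def)

lemma Lf_tpure: "Lf w (tpure a b) = w (a, b)"
  by (simp add: Lf_def fsupp_tpure) (simp add: tpure_def monw_def)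

lemma smulf_finite:
  fixes x :: "'p \<Rightarrow> 'f::mult_zero"
  shows "finite (fsupp x) \<Longrightarrow> finite (fsupp (smulf c x))"
  by (rule finite_subset[rotated]) (auto simp: fsupp_def smulf_def)

lemma diff_as: "x - y = x + smulf (-1) (y :: 'p \<Rightarrow> 'f::ring_1)"
  by (auto simp: smulf_def)

lemma Lf_diff: "finite (fsupp x) \<Longrightarrow> finite (fsupp y) \<Longrightarrow> Lf w (x - y) = Lf w x - Lf w y"
  by (simp only: diff_as Lf_add smulf_finite Lf_smul) simp

lemma finite_tpure: "finite (fsupp (tpure a b :: _ \<Rightarrow> 'f::zero_neq_one))"
  by (simp add: fsupp_tpure)

lemma finite_diff: "finite (fsupp x) \<Longrightarrow> finite (fsupp y) \<Longrightarrow> finite (fsupp (x - (y :: 'p \<Rightarrow> 'f::ring_1)))"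
  by (rule finite_subset[of _ "fsupp x \<union> fsupp y"]) (auto simp: fsupp_def)

lemma tens_rel_L:
  fixes sR :: "'f::field \<Rightarrow> 'r::ring \<Rightarrow> 'r" and sC :: "'f \<Rightarrow> 'c::ring \<Rightarrow> 'c"
  assumes \<phi>: "\<forall>a b. \<phi> (a + b) = \<phi> a + \<phi> b" "\<forall>c a. \<phi> (sR c a) = c * \<phi> a"
    and \<psi>: "\<forall>a b. \<psi> (a + b) = \<psi> a + \<psi> b" "\<forall>c a. \<psi> (sC c a) = c * \<psi> a"
    and z: "z \<in> tens_rel sR sC"
  shows "finite (fsupp z) \<and> Lf (\<lambda>p. \<phi> (fst p) * \<psi> (snd p)) z = 0"
  using z
proof induction
  case zero then show ?case by (simp add: Lf_def fsupp_def)
next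
  case (add x y)
  have "fsupp (x + y) \<subseteq> fsupp x \<union> fsupp y" by (auto simp: fsupp_def)
  then have "finite (fsupp (x + y))" using add.IH by (meson finite_UnI finite_subset)
  then show ?case using add.IH by (simp only: Lf_add) simp
next
  case (smul x a) then show ?case by (simp add: Lf_smul smulf_finite)
next
  case (addL r1 r2 c) show ?case
    apply (rule conjI)
     apply (intro finite_diff finite_tpure smulf_finite)
    apply (simp only: Lf_diff finite_diff finite_tpure smulf_finite Lf_tpure Lf_smul fst_conv snd_conv)
    apply (simp add: \<phi> algebra_simps)
    done
next
  case (addR r c1 c2) show ?case
    apply (rule conjI)
     apply (intro finite_diff finite_tpure smulf_finite)
    apply (simp only: Lf_diff finite_diff finite_tpure smulf_finite Lf_tpure Lf_smul fst_conv snd_conv)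
    apply (simp add: \<psi> algebra_simps)
    done
next
  case (smulL a r c) show ?case
    apply (rule conjI)
     apply (intro finite_diff finite_tpure smulf_finite)
    apply (simp only: Lf_diff finite_diff finite_tpure smulf_finite Lf_tpure Lf_smul fst_conv snd_conv)
    apply (simp add: \<phi> algebra_simps)
    done
next
  case (smulR r a c) show ?case
    apply (rule conjI)
     apply (intro finite_diff finite_tpure smulf_finite)
    apply (simp only: Lf_diff finite_diff finite_tpure smulf_finite Lf_tpure Lf_smul fst_conv snd_conv)
    apply (simp add: \<psi> algebra_simps)
    done
qed

lemma tens_inj:
  fixes sR :: "'f::field \<Rightarrow> 'r::ring \<Rightarrow> 'r" and sC :: "'f \<Rightarrow> 'c::ring \<Rightarrow> 'c"
  assumes "vector_space sR" "vector_space sC" "tpure X \<gamma> \<in> tens_rel sR sC" "\<gamma> \<noteq> 0"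
  shows "X = 0"
proof (rule ccontr)
  assume "X \<noteq> 0"
  then obtain \<phi> where \<phi>: "\<forall>a b. \<phi> (a + b) = \<phi> a + \<phi> b" "\<forall>c a. \<phi> (sR c a) = c * \<phi> a" "\<phi> X = 1"
    using functional_exists[OF assms(1)] by blast
  obtain \<psi> where \<psi>: "\<forall>a b. \<psi> (a + b) = \<psi> a + \<psi> b" "\<forall>c a. \<psi> (sC c a) = c * \<psi> a" "\<psi> \<gamma> = 1"
    using functional_exists[OF assms(2,4)] by blast
  have "Lf (\<lambda>p. \<phi> (fst p) * \<psi> (snd p)) (tpure X \<gamma>) = 0"
    using tens_rel_L[OF \<phi>(1,2) \<psi>(1,2) assms(3)] by blast
  then show False by (simp add: Lf_tpure \<phi>(3) \<psi>(3))
qed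




lemma tmul_tpure:
  "tmul (tpure a b :: ('r::ring \<times> 'c::ring) \<Rightarrow> 'f::field) (tpure a' b') = tpure (a * a') (b * b')"
proof -
  have "tmul (tpure a b :: ('r \<times> 'c) \<Rightarrow> 'f) (tpure a' b') = smulf (1 * 1) (tpure (a * a') (b * b'))"
    unfolding tmul_def fsupp_tpure by (simp add: tpure_def monw_def)
  then show ?thesis by (simp add: smulf_def)
qed

lemma gw_tmul:
  "w \<noteq> [] \<Longrightarrow> gwprod tmul (\<lambda>x. tpure (F x) (G x) :: ('r::ring \<times> 'c::ring) \<Rightarrow> 'f::field) w
     = tpure (gwprod (*) F w) (gwprod (*) G w)"
  by (induction w rule: induct_list012) (auto simp: tmul_tpure)

lemma gw_map: "gwprod m s (map \<phi> w) = gwprod m (\<lambda>x. s (\<phi> x)) w"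
  by (induction w rule: induct_list012) auto

lemma projG_lift: "map (\<lambda>((a, b), i). (a, i)) (lift_word h w) = w"
  by (induction w) (auto simp: lift_word_def)

lemma inj_lift: "inj (lift_word h)"
  by (metis injI projG_lift)

lemma lift_perm: "lift_word h (perm_word n g \<sigma>) = perm_word n (\<lambda>i. (g i, h i)) \<sigma>"
  by (simp add: lift_word_def perm_word_def)

lemma sum_fun_apply: "(sum F A) v = (\<Sum>a\<in>A. F a v)"
  by (induction A rule: infinite_finite_induct) auto

lemma tr_diff: "x \<in> tens_rel sR sC \<Longrightarrow> y \<in> tens_rel sR sC \<Longrightarrow> x - y \<in> tens_rel sR sC"
  by (simp only: diff_as) (intro tens_rel.add tens_rel.smul)

lemma tr_sum: "(\<And>a. a \<in> A \<Longrightarrow> F a \<in> tens_rel sR sC) \<Longrightarrow> sum F A \<in> tens_rel sR sC"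
  by (induction A rule: infinite_finite_induct) (auto intro: tens_rel.zero tens_rel.add)

lemma tr_tpure0:
  fixes sR :: "'f::field \<Rightarrow> 'r::ring \<Rightarrow> 'r" and sC :: "'f \<Rightarrow> 'c::ring \<Rightarrow> 'c"
  shows "tpure (0::'r) c \<in> tens_rel sR sC"
proof -
  have "tpure (0 + 0) c - tpure 0 c - tpure 0 c \<in> tens_rel sR sC" by (rule tens_rel.addL)
  then have "smulf (-1) (tpure (0 + 0) c - tpure 0 c - tpure 0 c) \<in> tens_rel sR sC"
    by (rule tens_rel.smul)
  moreover have "smulf (-1) (tpure (0 + 0) c - tpure 0 c - tpure 0 c) = (tpure (0::'r) c :: _ \<Rightarrow> 'f)"
    by (rule ext) (simp add: smulf_def)
  ultimately show ?thesis by simp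
qed

lemma ab4: "(a::'a::ab_group_add) - (b + c) = (a - b - d) + (d - c)"
  by (simp add: algebra_simps)

lemma tr_sum_tpure:
  fixes sR :: "'f::field \<Rightarrow> 'r::ring \<Rightarrow> 'r" and sC :: "'f \<Rightarrow> 'c::ring \<Rightarrow> 'c"
  shows "tpure (sum Y A) \<gamma> - (\<Sum>j\<in>A. tpure (Y j) \<gamma>) \<in> tens_rel sR sC"
proof (induction A rule: infinite_finite_induct)
  case (infinite A) then show ?case using tr_tpure0 by simp
next
  case empty then show ?case using tr_tpure0 by simp
next
  case (insert x A)
  have "tpure (sum Y (insert x A)) \<gamma> - (\<Sum>j\<in>insert x A. tpure (Y j) \<gamma>)
      = tpure (Y x + sum Y A) \<gamma> - (tpure (Y x) \<gamma> + (\<Sum>j\<in>A. tpure (Y j) \<gamma>))"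
    by (simp only: sum.insert[OF insert.hyps])
  also have "\<dots> = (tpure (Y x + sum Y A) \<gamma> - tpure (Y x) \<gamma> - tpure (sum Y A) \<gamma>)
        + (tpure (sum Y A) \<gamma> - (\<Sum>j\<in>A. tpure (Y j) \<gamma>) :: 'r \<times> 'c \<Rightarrow> 'f)"
    by (rule ab4)
  also have "\<dots> \<in> tens_rel sR sC"
    by (intro tens_rel.add tens_rel.addL insert.IH)
  finally show ?case .
qed

lemma tr_scale2:
  fixes sR :: "'f::field \<Rightarrow> 'r::ring \<Rightarrow> 'r" and sC :: "'f \<Rightarrow> 'c::ring \<Rightarrow> 'c"
  shows "tpure (sR a R) (sC z C) - smulf (a * z) (tpure R C) \<in> tens_rel sR sC"
proof -
  have "tpure (sR a R) (sC z C) - smulf (a * z) (tpure R C)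
      = (tpure (sR a R) (sC z C) - smulf a (tpure R (sC z C)))
        + smulf a (tpure R (sC z C) - smulf z (tpure R C))"
    by (rule ext) (simp add: smulf_def algebra_simps)
  also have "\<dots> \<in> tens_rel sR sC"
    by (intro tens_rel.add tens_rel.smul tens_rel.smulL tens_rel.smulR)
  finally show ?thesis .
qed




theorem mainTheorem8:
  fixes sR :: "'f::field_char_0 \<Rightarrow> 'r::ring \<Rightarrow> 'r" and Rg :: "'g::group_add \<Rightarrow> 'r set"
    and sC :: "'f \<Rightarrow> 'c::ring \<Rightarrow> 'c" and Cg :: "'h::ab_group_add \<Rightarrow> 'c set"
    and \<beta> :: "'h \<Rightarrow> 'h \<Rightarrow> 'f"
    and n :: nat and g :: "nat \<Rightarrow> 'g" and h :: "nat \<Rightarrow> 'h"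
    and f :: "((('g \<times> 'h) \<times> nat) list \<Rightarrow> 'f)"
  assumes "bicharacter \<beta>"
    and "graded_algebra sC Cg" and "beta_commutative \<beta> sC Cg"
    and "generates_beta_variety \<beta> sC Cg"
    and "graded_algebra sR Rg"
    and "f \<in> TG_tensor sR Rg sC Cg" and "f \<in> Pml n (\<lambda>i. (g i, h i))"
  shows "\<exists>f0. f0 \<in> Pml n g \<and> f0 \<in> TG sR Rg \<and> f = phi \<beta> h f0"
proof -
  note B = assms(1) and GAC = assms(2) and BCC = assms(3) and GEN = assms(4) and GAR = assms(5)
    and fT = assms(6) and fP = assms(7)
  have f_free: "f \<in> free_alg" using fT by (simp add: TG_tensor_def)
  show ?thesis
  proof (cases "n = 0")
    case True
    have fv0: "f v = 0" for v
      proof (rule ccontr)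
        assume nz: "f v \<noteq> 0"
        then have "v \<in> fsupp f" by (simp add: fsupp_def)
        with fP True have "v = []" by (auto simp: Pml_def perm_word_def)
        moreover have "f [] = 0" using f_free by (simp add: free_alg_def)
        ultimately show False using nz by simp
      qed
    have f0: "f = 0" using fv0 by (intro ext) simp
    have fs0: "fsupp (0 :: ('g \<times> nat) list \<Rightarrow> 'f) = {}" by (simp add: fsupp_def)
    have "(0 :: ('g \<times> nat) list \<Rightarrow> 'f) \<in> Pml n g" by (simp add: Pml_def fs0)
    moreover have "(0 :: ('g \<times> nat) list \<Rightarrow> 'f) \<in> TG sR Rg"
      by (simp add: TG_def free_alg_zero geval_def fs0)
    moreover have "f = phi \<beta> h 0" by (simp add: phi_def fs0 f0)
    ultimately show ?thesis by blast
  next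
    case False
    then have n: "1 \<le> n" by simp
    define Wg where "Wg = {perm_word n g \<sigma> | \<sigma>. \<sigma> permutes {1..n}}"
    define zc where "zc w = zeta_coef \<beta> (lift_word h w)" for w :: "('g \<times> nat) list"
    define f0 where "f0 = (\<lambda>w. if w \<in> Wg then f (lift_word h w) * inverse (zc w) else 0)"
    have zcnz: "zc w \<noteq> 0" if "w \<in> Wg" for w
      using that zeta_props[OF GAC BCC B GEN n] unfolding Wg_def zc_def by blast
    have finW: "finite Wg"
    proof -
      have "Wg = (\<lambda>\<sigma>. perm_word n g \<sigma>) ` {\<sigma>. \<sigma> permutes {1..n}}" by (auto simp: Wg_def)
      then show ?thesis using finite_permutations[of "{1..n}"] by simp
    qed
    have nilW: "[] \<notin> Wg" using n by (auto simp: Wg_def perm_word_def)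
    have fsf0: "fsupp f0 = {w \<in> Wg. f (lift_word h w) \<noteq> 0}"
      using zcnz by (auto simp: fsupp_def f0_def)
    have fsf: "fsupp f = lift_word h ` fsupp f0"
    proof
      show "fsupp f \<subseteq> lift_word h ` fsupp f0"
      proof
        fix v assume v: "v \<in> fsupp f"
        then obtain \<sigma> where \<sigma>: "\<sigma> permutes {1..n}" "v = perm_word n (\<lambda>i. (g i, h i)) \<sigma>"
          using fP by (auto simp: Pml_def)
        then have "v = lift_word h (perm_word n g \<sigma>)" by (simp add: lift_perm)
        moreover have "perm_word n g \<sigma> \<in> fsupp f0"
        proof -
          have "perm_word n g \<sigma> \<in> Wg" using \<sigma>(1) by (auto simp: Wg_def)
          moreover have "f (lift_word h (perm_word n g \<sigma>)) \<noteq> 0"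
            using v \<open>v = lift_word h (perm_word n g \<sigma>)\<close> by (simp add: fsupp_def)
          ultimately show ?thesis by (simp add: fsf0)
        qed
        ultimately show "v \<in> lift_word h ` fsupp f0" by blast
      qed
      show "lift_word h ` fsupp f0 \<subseteq> fsupp f"
        unfolding fsf0 by (auto simp: fsupp_def)
    qed
    have fin0: "finite (fsupp f0)" using finW by (simp add: fsf0)
    have inj: "inj_on (lift_word h) A" for A using inj_lift by (rule inj_on_subset) simp

    have G1: "f0 \<in> Pml n g"
      unfolding Pml_def using fin0 by (auto simp: fsf0 Wg_def)

    have G3: "f = phi \<beta> h f0"
    proof (rule ext)
      fix v
      have "phi \<beta> h f0 v = (\<Sum>w\<in>fsupp f0. f0 w * (zc w * monw (lift_word h w) v))"
        by (simp add: phi_def sum_fun_apply smulf_def zeta_def zc_def)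
      also have "\<dots> = (\<Sum>w\<in>fsupp f0. if lift_word h w = v then f v else 0)"
      proof (rule sum.cong[OF refl])
        fix w assume w: "w \<in> fsupp f0"
        then have "w \<in> Wg" by (simp add: fsf0)
        then have "f0 w * zc w = f (lift_word h w)" using zcnz by (simp add: f0_def)
        then show "f0 w * (zc w * monw (lift_word h w) v) = (if lift_word h w = v then f v else 0)"
          by (auto simp: monw_def mult.assoc[symmetric])
      qed
      also have "\<dots> = f v"
      proof (cases "v \<in> lift_word h ` fsupp f0")
        case True
        then obtain w0 where w0: "w0 \<in> fsupp f0" "v = lift_word h w0" by blast
        have "(\<Sum>w\<in>fsupp f0. if lift_word h w = v then f v else 0) = (\<Sum>w\<in>fsupp f0. if w = w0 then f v else 0)"
          by (rule sum.cong[OF refl]) (use w0 inj_lift in \<open>auto simp: inj_def\<close>)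
        also have "\<dots> = f v" using w0 fin0 by simp
        finally show ?thesis .
      next
        case False
        then have "f v = 0" using fsf by (auto simp: fsupp_def)
        moreover have "(\<Sum>w\<in>fsupp f0. if lift_word h w = v then f v else 0) = 0"
          using False by (intro sum.neutral) auto
        ultimately show ?thesis by simp
      qed
      finally show "f v = phi \<beta> h f0 v" by simp
    qed

    have G2: "f0 \<in> TG sR Rg"
      unfolding TG_def
    proof (intro CollectI conjI allI impI)
      show "f0 \<in> free_alg" using fin0 nilW by (simp add: free_alg_def f0_def)
      fix r assume r: "graded_subst Rg r"
      interpret C: alg "(*)" sC by (rule ga_alg[OF GAC])
      let ?A = "perm_word n h id"
      have Afree: "(monw ?A :: ('h \<times> nat) list \<Rightarrow> 'f) \<in> free_alg" by (rule monw_free[OF perm_word_ne[OF n]])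
      have "(monw ?A :: ('h \<times> nat) list \<Rightarrow> 'f) \<notin> TG sC Cg"
        using monw_notin[OF B n] GEN by (simp add: generates_beta_variety_def)
      then obtain c where c: "graded_subst Cg c" and gnz: "geval (*) sC c (monw ?A :: ('h \<times> nat) list \<Rightarrow> 'f) \<noteq> 0"
        using Afree unfolding TG_def by blast
      define \<gamma> where "\<gamma> = gwprod (*) c ?A"
      have gnz': "\<gamma> \<noteq> 0" using gnz by (simp add: C.geval_monw \<gamma>_def)
      have rel: "\<gamma> = sC (zc (perm_word n g \<sigma>)) (gwprod (*) c (perm_word n h \<sigma>))"
        if \<sigma>: "\<sigma> permutes {1..n}" for \<sigma>
      proof -
        let ?z = "zc (perm_word n g \<sigma>)" and ?S = "perm_word n h \<sigma>"
        have "monw ?A - smulf ?z (monw ?S) \<in> TG sC Cg"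
          using zeta_props[where g=g and h=h, OF GAC BCC B GEN n \<sigma>] GEN
          by (simp add: generates_beta_variety_def zc_def)
        then have "geval (*) sC c (monw ?A - smulf ?z (monw ?S) :: ('h \<times> nat) list \<Rightarrow> 'f) = 0"
          using c unfolding TG_def by blast
        moreover have "finite (fsupp (monw ?A :: ('h \<times> nat) list \<Rightarrow> 'f))"
          by (rule free_algD(1)[OF Afree])
        moreover have "finite (fsupp (monw ?S :: ('h \<times> nat) list \<Rightarrow> 'f))"
          by (rule free_algD(1)[OF monw_free[OF perm_word_ne[OF n]]])
        moreover have "finite (fsupp (smulf ?z (monw ?S) :: ('h \<times> nat) list \<Rightarrow> 'f))"
          by (rule free_algD(1)[OF free_alg_smul[OF monw_free[OF perm_word_ne[OF n]]]])
        ultimately show ?thesis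
          by (simp add: C.geval_minus C.geval_smul C.geval_monw \<gamma>_def)
      qed
      define ts where "ts = (\<lambda>x. tpure (r ((\<lambda>((a, b), i). (a, i)) x)) (c ((\<lambda>((a, b), i). (b, i)) x))
          :: ('r \<times> 'c) \<Rightarrow> 'f)"
      have tsg: "graded_subst (tens_comp Rg Cg) ts"
        using r c unfolding graded_subst_def tens_comp_def ts_def
        by (auto simp: fsupp_tpure)
      define E where "E = geval tmul smulf ts f"
      have Etr: "E \<in> tens_rel sR sC" using fT tsg unfolding TG_tensor_def E_def by blast
      define Y where "Y w = sR (f0 w) (gwprod (*) r w)" for w
      define X where "X = geval (*) sR r f0"
      have XY: "X = sum Y (fsupp f0)" by (simp add: X_def Y_def geval_def)
      have E2: "E = (\<Sum>w\<in>fsupp f0. smulf (f (lift_word h w)) (gwprod tmul ts (lift_word h w)))"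
        unfolding E_def geval_def fsf by (rule sum.reindex[OF inj, unfolded comp_def])
      have termw: "tpure (Y w) \<gamma> - smulf (f (lift_word h w)) (gwprod tmul ts (lift_word h w)) \<in> tens_rel sR sC"
        if w: "w \<in> fsupp f0" for w
      proof -
        from w have "w \<in> Wg" by (simp add: fsf0)
        then obtain \<sigma> where \<sigma>: "\<sigma> permutes {1..n}" and we: "w = perm_word n g \<sigma>" by (auto simp: Wg_def)
        let ?z = "zc w"
        have znz: "?z \<noteq> 0" using zcnz \<open>w \<in> Wg\<close> by blast
        have lne: "lift_word h w \<noteq> []" using perm_word_ne[OF n] we by (simp add: lift_word_def)
        have gt: "gwprod tmul ts (lift_word h w) = tpure (gwprod (*) r w) (gwprod (*) c (perm_word n h \<sigma>))"
          unfolding ts_def gw_tmul[OF lne] gw_map[symmetric] projG_lift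
          by (simp only: we proj_lift)
        have fz: "f (lift_word h w) = f0 w * ?z"
          using \<open>w \<in> Wg\<close> znz by (simp add: f0_def)
        have gz: "\<gamma> = sC ?z (gwprod (*) c (perm_word n h \<sigma>))"
          using rel[OF \<sigma>] we by simp
        show ?thesis
          unfolding Y_def gt fz gz by (rule tr_scale2)
      qed
      have "tpure X \<gamma> - E = (tpure (sum Y (fsupp f0)) \<gamma> - (\<Sum>w\<in>fsupp f0. tpure (Y w) \<gamma>))
           + (\<Sum>w\<in>fsupp f0. tpure (Y w) \<gamma> - smulf (f (lift_word h w)) (gwprod tmul ts (lift_word h w)))"
        by (simp only: XY E2 sum_subtractf) (simp add: algebra_simps)
      also have "\<dots> \<in> tens_rel sR sC"
        by (intro tens_rel.add tr_sum_tpure tr_sum termw)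
      finally have D: "tpure X \<gamma> - E \<in> tens_rel sR sC" .
      have "tpure X \<gamma> = (tpure X \<gamma> - E) + E" by simp
      also have "\<dots> \<in> tens_rel sR sC" by (intro tens_rel.add D Etr)
      finally have "tpure X \<gamma> \<in> tens_rel sR sC" .
      moreover have "vector_space sR" using GAR by (simp add: graded_algebra_def)
      moreover have "vector_space sC" using GAC by (simp add: graded_algebra_def)
      ultimately have "X = 0" using tens_inj gnz' by blast
      then show "geval (*) sR r f0 = 0" by (simp add: X_def)
    qed
    show ?thesis using G1 G2 G3 by blast
  qed
qed


end
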